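(* Let $(\Theta,\mathcal{B},\mu,\omega)$ be a metric dynamical system, $V_r\in[0,1)$, and $F:\Theta\times\mathbb{R}\to\mathbb{R}$ measurable with $\int_0^1\|F(\theta\cdot t,\cdot)\|_{[0,1],0,1}\,dt<\infty$ for all $\theta\in\Theta$, such that $\dot x(t)=F(\theta\cdot t,x(t))$ has global solutions, and suppose $F(\theta,x)$ is non-increasing in $x$ for each $\theta$. Let $\widehat V$ be the lifted potential semiflow defined below. Then $$\widehat V_t(\theta,x_1)\le\widehat V_t(\theta,x_2)+K\quad\text{for all }t\ge0,\ \theta\in\Theta,\ x_1,x_2\in\mathbb{R}\text{ with }x_1\le x_2,$$ where $K=\frac{V_r}{1-V_r}+1$.
   Context: A metric dynamical system $(\Theta,\mathcal{B},\mu,\omega)$: probability space with a measurable $\mu$-preserving flow $\omega:\mathbb{R}\times\Theta\to\Theta$, written $\theta\cdot t$. For $f:\mathbb{R}\to\mathbb{R}$, $\|f\|_{[0,1],0,1}=\sup_{x\in[0,1]}|f(x)|+\sup_{x\ne y\in[0,1]}\frac{|f(y)-f(x)|}{|y-x|}$. $\varphi_t(\theta,x)$ denotes the solution at time $t$ of $\dot x(t)=F(\theta\cdot t,x(t))$ with $x(0)=x$. Definition of $\widehat V$: for $x\in\mathbb{R}$ let $[x]$ be its integer part and $\{x\}=x-[x]\in[0,1)$. Let $\tau(\theta,x)=\inf\{t\ge0:\varphi_t(\theta,\{x\})=1\}$ (with $\inf\emptyset=\infty$). For $(\theta,x)$ define $s_0=0$, $s_1=\tau(\theta,x)$, $S_n=S_n(\theta,x)=\sum_{i=0}^n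 s_i$, and $s_{n+1}=\tau(\theta\cdot S_n,V_r)$. Let $n(t,\theta,x)=\max\{n\ge0: S_n(\theta,x)\le t\}$. For $t\ge0$ set $\widehat V_t(\theta,x)=[x]+\varphi_t(\theta,\{x\})$ if $n(t,\theta,x)=0$, and $\widehat V_t(\theta,x)=[x]+n+\varphi_{t-S_n}(\theta\cdot S_n,V_r)$ if $n(t,\theta,x)=n\ge1$. *)

theory Defs
  imports "HOL-Probability.Probability"
begin

text \<open>Metric dynamical system: a probability space M with a measurable,
  measure-preserving flow; theta \<cdot> t is written  omega t theta.\<close>
definition metric_dynamical_system :: "'a measure \<Rightarrow> (real \<Rightarrow> 'a \<Rightarrow> 'a) \<Rightarrow> bool" where
  "metric_dynamical_system M \<omega> \<longleftrightarrow>
     prob_space M \<and>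
     (\<lambda>(t, \<theta>). \<omega> t \<theta>) \<in> measurable (borel \<Otimes>\<^sub>M M) M \<and>
     (\<forall>t. \<omega> t \<in> measurable M M \<and> distr M M (\<omega> t) = M) \<and>
     (\<forall>\<theta>\<in>space M. \<omega> 0 \<theta> = \<theta>) \<and>
     (\<forall>\<theta>\<in>space M. \<forall>s t. \<omega> (s + t) \<theta> = \<omega> t (\<omega> s \<theta>))"

text \<open>The norm  sup over [0,1] of |f| plus Lipschitz constant on [0,1]
  (valued in ennreal so that it may be infinite).\<close>
definition lip01_norm :: "(real \<Rightarrow> real) \<Rightarrow> ennreal" where
  "lip01_norm f =
     (SUP x\<in>{0..1}. ennreal \<bar>f x\<bar>) +
     (SUP x\<in>{0..1}. SUP y\<in>{0..1} - {x}. ennreal (\<bar>f y - f x\<bar> / \<bar>y - x\<bar>))"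

text \<open>Hitting time of 1 starting from the fractional part of x (inf of empty set = \<infinity>).\<close>
definition hit_time :: "(real \<Rightarrow> 'a \<Rightarrow> real \<Rightarrow> real) \<Rightarrow> 'a \<Rightarrow> real \<Rightarrow> ereal" where
  "hit_time \<phi> \<theta> x = Inf {ereal t | t. 0 \<le> t \<and> \<phi> t \<theta> (frac x) = 1}"

fun hitS :: "(real \<Rightarrow> 'a \<Rightarrow> real \<Rightarrow> real) \<Rightarrow> (real \<Rightarrow> 'a \<Rightarrow> 'a) \<Rightarrow> real \<Rightarrow> 'a \<Rightarrow> real \<Rightarrow> nat \<Rightarrow> ereal" where
  "hitS \<phi> \<omega> Vr \<theta> x 0 = 0"
| "hitS \<phi> \<omega> Vr \<theta> x (Suc 0) = hit_time \<phi> \<theta> x"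
| "hitS \<phi> \<omega> Vr \<theta> x (Suc (Suc n)) =
     hitS \<phi> \<omega> Vr \<theta> x (Suc n) +
     hit_time \<phi> (\<omega> (real_of_ereal (hitS \<phi> \<omega> Vr \<theta> x (Suc n))) \<theta>) Vr"

definition num_hits :: "(real \<Rightarrow> 'a \<Rightarrow> real \<Rightarrow> real) \<Rightarrow> (real \<Rightarrow> 'a \<Rightarrow> 'a) \<Rightarrow> real \<Rightarrow> real \<Rightarrow> 'a \<Rightarrow> real \<Rightarrow> nat" where
  "num_hits \<phi> \<omega> Vr t \<theta> x = (GREATEST n. hitS \<phi> \<omega> Vr \<theta> x n \<le> ereal t)"

definition Vhat :: "(real \<Rightarrow> 'a \<Rightarrow> real \<Rightarrow> real) \<Rightarrow> (real \<Rightarrow> 'a \<Rightarrow> 'a) \<Rightarrow> real \<Rightarrow> real \<Rightarrow> 'a \<Rightarrow> real \<Rightarrow> real" where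
  "Vhat \<phi> \<omega> Vr t \<theta> x =
     (let n = num_hits \<phi> \<omega> Vr t \<theta> x;
          Sn = real_of_ereal (hitS \<phi> \<omega> Vr \<theta> x n)
      in if n = 0 then of_int \<lfloor>x\<rfloor> + \<phi> t \<theta> (frac x)
         else of_int \<lfloor>x\<rfloor> + real n + \<phi> (t - Sn) (\<omega> Sn \<theta>) Vr)"

end

theory Submission imports Defs begin

lemma last_crossing:
  fixes f :: "real \<Rightarrow> real"
  assumes cont: "continuous_on {a..b} f" and ab: "a \<le> b" and fa: "f a \<le> c" and fb: "c < f b"
  shows "\<exists>a'. a \<le> a' \<and> a' < b \<and> f a' = c \<and> (\<forall>s. a' < s \<and> s \<le> b \<longrightarrow> c < f s)"
proof -
  define T where "T = {a..b} \<inter> f -` {..c}"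
  have cl: "closed T" unfolding T_def
    by (rule continuous_closed_preimage[OF cont]) auto
  have ne: "T \<noteq> {}" using fa ab by (auto simp: T_def)
  have bdd: "bdd_above T" by (auto simp: T_def bdd_above_def)
  define a' where "a' = Sup T"
  have aT: "a' \<in> T" unfolding a'_def by (rule closed_contains_Sup[OF ne bdd cl])
  have up: "\<And>s. s \<in> T \<Longrightarrow> s \<le> a'" unfolding a'_def using bdd by (simp add: cSup_upper)
  have "a \<in> T" using fa ab by (auto simp: T_def)
  hence aa: "a \<le> a'" using up by blast
  have ab': "a' \<le> b" "f a' \<le> c" using aT by (auto simp: T_def)
  have neq: "a' \<noteq> b" using ab' fb by auto
  have after: "\<forall>s. a' < s \<and> s \<le> b \<longrightarrow> c < f s"
  proof (intro allI impI)
    fix s assume s: "a' < s \<and> s \<le> b"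
    show "c < f s"
    proof (rule ccontr)
      assume "\<not> c < f s"
      hence "s \<in> T" using s aa by (auto simp: T_def)
      thus False using up s by force
    qed
  qed
  have "f a' = c"
  proof (rule ccontr)
    assume "f a' \<noteq> c"
    hence lt: "f a' < c" using ab' by auto
    have "continuous_on {a'..b} f" using aa by (intro continuous_on_subset[OF cont]) auto
    then obtain z where z: "a' \<le> z" "z \<le> b" "f z = c"
      using IVT'[of f a' c b] lt fb ab' by force
    have "z \<noteq> a'" using z lt by auto
    thus False using after z by force
  qed
  thus ?thesis using aa ab' neq after by auto
qed

definition sol :: "(real \<Rightarrow> real \<Rightarrow> real) \<Rightarrow> (real \<Rightarrow> real) \<Rightarrow> real \<Rightarrow> real \<Rightarrow> bool" where
  "sol \<Phi> g a b \<longleftrightarrow> (\<lambda>s. \<Phi> s (g s)) integrable_on {a..b} \<and>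
     (\<forall>u\<in>{a..b}. g u = g a + integral {a..u} (\<lambda>s. \<Phi> s (g s)))"

lemma solD: assumes "sol \<Phi> g a b" "u \<in> {a..b}" shows "g u = g a + integral {a..u} (\<lambda>s. \<Phi> s (g s))"
  using assms unfolding sol_def by blast

lemma solI: assumes "sol \<Phi> g a b" shows "(\<lambda>s. \<Phi> s (g s)) integrable_on {a..b}"
  using assms unfolding sol_def by blast

lemma sol_cont: assumes "sol \<Phi> g a b" shows "continuous_on {a..b} g"
proof -
  have "continuous_on {a..b} (\<lambda>u. g a + integral {a..u} (\<lambda>s. \<Phi> s (g s)))"
    using solI[OF assms] by (intro continuous_intros indefinite_integral_continuous_1)
  moreover have "\<And>u. u \<in> {a..b} \<Longrightarrow> g a + integral {a..u} (\<lambda>s. \<Phi> s (g s)) = g u"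
    using solD[OF assms] by metis
  ultimately show ?thesis by (rule continuous_on_eq)
qed

lemma sol_sub: assumes "sol \<Phi> g a b" "a \<le> u" "u \<le> v" "v \<le> b" shows "sol \<Phi> g u v"
  unfolding sol_def
proof
  have int: "(\<lambda>s. \<Phi> s (g s)) integrable_on {a..b}" using solI[OF assms(1)] .
  show "(\<lambda>s. \<Phi> s (g s)) integrable_on {u..v}"
    by (rule integrable_subinterval_real[OF int]) (use assms in auto)
  show "\<forall>w\<in>{u..v}. g w = g u + integral {u..w} (\<lambda>s. \<Phi> s (g s))"
  proof
    fix w assume w: "w \<in> {u..v}"
    have iw: "(\<lambda>s. \<Phi> s (g s)) integrable_on {a..w}"
      by (rule integrable_subinterval_real[OF int]) (use assms w in auto)
    have c: "integral {a..u} (\<lambda>s. \<Phi> s (g s)) + integral {u..w} (\<lambda>s. \<Phi> s (g s)) = integral {a..w} (\<lambda>s. \<Phi> s (g s))"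
      by (rule Henstock_Kurzweil_Integration.integral_combine[OF _ _ iw]) (use assms w in auto)
    have "g w = g a + integral {a..w} (\<lambda>s. \<Phi> s (g s))" using w assms(2-4) by (intro solD[OF assms(1)]) auto
    moreover have "g u = g a + integral {a..u} (\<lambda>s. \<Phi> s (g s))" using w assms(2-4) by (intro solD[OF assms(1)]) auto
    ultimately show "g w = g u + integral {u..w} (\<lambda>s. \<Phi> s (g s))" using c by linarith
  qed
qed

lemma contr_L:
  assumes mono: "\<And>s y z. s \<in> {a..b} \<Longrightarrow> y \<le> z \<Longrightarrow> \<Phi> s z \<le> \<Phi> s y"
    and sg: "sol \<Phi> g a b" and sh: "sol \<Phi> h a b" and ab: "a \<le> b" and c0: "0 \<le> c"
    and da: "g a - h a \<le> c"
  shows "g b - h b \<le> c"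
proof (rule ccontr)
  assume "\<not> g b - h b \<le> c"
  hence db: "c < g b - h b" by simp
  have cont: "continuous_on {a..b} (\<lambda>s. g s - h s)"
    using sol_cont[OF sg] sol_cont[OF sh] by (intro continuous_intros)
  obtain a' where a': "a \<le> a'" "a' < b" "g a' - h a' = c" "\<forall>s. a' < s \<and> s \<le> b \<longrightarrow> c < g s - h s"
    using last_crossing[OF cont ab _ db] da by auto
  have sg': "sol \<Phi> g a' b" and sh': "sol \<Phi> h a' b"
    using sol_sub[OF sg] sol_sub[OF sh] a' by auto
  have "g b = g a' + integral {a'..b} (\<lambda>s. \<Phi> s (g s))" "h b = h a' + integral {a'..b} (\<lambda>s. \<Phi> s (h s))"
    using a' by (intro solD[OF sg'] solD[OF sh']; auto)+
  moreover have "integral {a'..b} (\<lambda>s. \<Phi> s (g s)) \<le> integral {a'..b} (\<lambda>s. \<Phi> s (h s))"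
  proof (rule integral_le)
    show "(\<lambda>s. \<Phi> s (g s)) integrable_on {a'..b}" "(\<lambda>s. \<Phi> s (h s)) integrable_on {a'..b}"
      using solI[OF sg'] solI[OF sh'] by auto
    show "\<Phi> s (g s) \<le> \<Phi> s (h s)" if s: "s \<in> {a'..b}" for s
    proof -
      have "c \<le> g s - h s" using a' s by (cases "s = a'") force+
      hence "h s \<le> g s" using c0 by linarith
      thus "\<Phi> s (g s) \<le> \<Phi> s (h s)" using mono s a' by auto
    qed
  qed
  ultimately show False using a' db by linarith
qed

lemma contraction:
  assumes mono: "\<And>s y z. s \<in> {a..b} \<Longrightarrow> y \<le> z \<Longrightarrow> \<Phi> s z \<le> \<Phi> s y"
    and sg: "sol \<Phi> g a b" and sh: "sol \<Phi> h a b" and ab: "a \<le> b"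
  shows "(0 \<le> g a - h a \<longrightarrow> 0 \<le> g b - h b \<and> g b - h b \<le> g a - h a) \<and>
         (g a - h a \<le> 0 \<longrightarrow> g a - h a \<le> g b - h b \<and> g b - h b \<le> 0)"
proof (intro conjI impI)
  assume h: "0 \<le> g a - h a"
  show "g b - h b \<le> g a - h a" by (rule contr_L[OF mono sg sh ab h]) simp_all
  have "h b - g b \<le> 0" by (rule contr_L[OF mono sh sg ab]) (use h in auto)
  thus "0 \<le> g b - h b" by simp
next
  assume h: "g a - h a \<le> 0"
  show "g b - h b \<le> 0" by (rule contr_L[OF mono sg sh ab]) (use h in auto)
  have "h b - g b \<le> h a - g a" by (rule contr_L[OF mono sh sg ab]) (use h in auto)
  thus "g a - h a \<le> g b - h b" by simp
qed

locale sys =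
  fixes M :: "'a measure" and \<omega> :: "real \<Rightarrow> 'a \<Rightarrow> 'a"
    and F :: "'a \<Rightarrow> real \<Rightarrow> real" and \<phi> :: "real \<Rightarrow> 'a \<Rightarrow> real \<Rightarrow> real"
    and V :: real
  assumes mds: "metric_dynamical_system M \<omega>"
    and V0: "0 \<le> V" and V1: "V < 1"
    and F_meas: "(\<lambda>(\<theta>, x). F \<theta> x) \<in> borel_measurable (M \<Otimes>\<^sub>M borel)"
    and F_int: "\<And>\<theta>. \<theta> \<in> space M \<Longrightarrow>
                  (\<integral>\<^sup>+ t\<in>{0..1}. lip01_norm (F (\<omega> t \<theta>)) \<partial>lborel) < \<infinity>"
    and sol_int: "\<And>\<theta> x t. \<theta> \<in> space M \<Longrightarrow> 0 \<le> t \<Longrightarrow>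
                  (\<lambda>s. F (\<omega> s \<theta>) (\<phi> s \<theta> x)) absolutely_integrable_on {0..t}"
    and sol_eq: "\<And>\<theta> x t. \<theta> \<in> space M \<Longrightarrow> 0 \<le> t \<Longrightarrow>
                  \<phi> t \<theta> x = x + integral {0..t} (\<lambda>s. F (\<omega> s \<theta>) (\<phi> s \<theta> x))"
    and F_mono: "\<And>\<theta> x y. \<theta> \<in> space M \<Longrightarrow> x \<le> y \<Longrightarrow> F \<theta> y \<le> F \<theta> x"
begin

lemma om_sp: "\<theta> \<in> space M \<Longrightarrow> \<omega> t \<theta> \<in> space M"
  using mds unfolding metric_dynamical_system_def by (meson measurable_space)

lemma om_add: "\<theta> \<in> space M \<Longrightarrow> \<omega> (s + t) \<theta> = \<omega> t (\<omega> s \<theta>)"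
  using mds unfolding metric_dynamical_system_def by blast

lemma om_0: "\<theta> \<in> space M \<Longrightarrow> \<omega> 0 \<theta> = \<theta>"
  using mds unfolding metric_dynamical_system_def by blast

lemma phi0: "\<theta> \<in> space M \<Longrightarrow> \<phi> 0 \<theta> y = y"
  using sol_eq[of \<theta> 0 y] by simp

definition FF :: "'a \<Rightarrow> real \<Rightarrow> real \<Rightarrow> real" where "FF \<theta> s y = F (\<omega> s \<theta>) y"

lemma FF_mono: "\<theta> \<in> space M \<Longrightarrow> y \<le> z \<Longrightarrow> FF \<theta> s z \<le> FF \<theta> s y"
  unfolding FF_def by (intro F_mono om_sp)

lemma seg_sol:
  assumes th: "\<theta> \<in> space M" and S: "0 \<le> S" "S \<le> b"
  shows "sol (FF \<theta>) (\<lambda>s. \<phi> (s - S) (\<omega> S \<theta>) y) S b"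
    and "(\<lambda>s. \<bar>FF \<theta> s (\<phi> (s - S) (\<omega> S \<theta>) y)\<bar>) integrable_on {S..b}"
proof -
  define th' where "th' = \<omega> S \<theta>"
  have th': "th' \<in> space M" unfolding th'_def by (rule om_sp[OF th])
  define \<psi> where "\<psi> r = F (\<omega> r th') (\<phi> r th' y)" for r
  define f where "f s = FF \<theta> s (\<phi> (s - S) th' y)" for s
  have eq: "(\<lambda>x. f (x + S)) = \<psi>"
  proof
    fix x
    have "\<omega> (x + S) \<theta> = \<omega> x th'" unfolding th'_def using om_add[OF th, of S x] by (simp add: add.commute)
    thus "f (x + S) = \<psi> x" by (simp add: f_def \<psi>_def FF_def)
  qed
  have ai: "\<psi> absolutely_integrable_on {0..t}" if "0 \<le> t" for t
    unfolding \<psi>_def by (rule sol_int[OF th' that])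
  have int: "f integrable_on {S..u}" "(\<lambda>s. \<bar>f s\<bar>) integrable_on {S..u}" if "S \<le> u" for u
  proof -
    have "\<psi> integrable_on {S-S..u-S}" "(\<lambda>x. norm (\<psi> x)) integrable_on {S-S..u-S}"
      using ai[of "u - S"] that by (auto simp: absolutely_integrable_on_def)
    thus "f integrable_on {S..u}" "(\<lambda>s. \<bar>f s\<bar>) integrable_on {S..u}"
      using integrable_shift_real_ivl_iff[of f S S u] integrable_shift_real_ivl_iff[of "\<lambda>s. \<bar>f s\<bar>" S S u]
      by (auto simp: eq fun_cong[OF eq])
  qed
  show "(\<lambda>s. \<bar>FF \<theta> s (\<phi> (s - S) (\<omega> S \<theta>) y)\<bar>) integrable_on {S..b}"
    using int(2)[OF S(2)] by (simp add: f_def[abs_def] th'_def)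
  show "sol (FF \<theta>) (\<lambda>s. \<phi> (s - S) (\<omega> S \<theta>) y) S b"
    unfolding sol_def
  proof (intro conjI ballI)
    show "(\<lambda>s. FF \<theta> s (\<phi> (s - S) (\<omega> S \<theta>) y)) integrable_on {S..b}"
      using int(1)[OF S(2)] by (simp add: f_def[abs_def] th'_def)
    fix u assume u: "u \<in> {S..b}"
    have "integral {S-S..u-S} (\<lambda>x. f (x + S)) = integral {S..u} f" by (rule integral_shift_real_ivl)
    hence i: "integral {0..u-S} \<psi> = integral {S..u} f" by (simp add: eq)
    have "\<phi> (u - S) th' y = y + integral {0..u-S} \<psi>"
      unfolding \<psi>_def using u by (intro sol_eq th') auto
    moreover have "\<phi> (S - S) th' y = y" using phi0[OF th'] by simp
    ultimately show "\<phi> (u - S) (\<omega> S \<theta>) y = \<phi> (S - S) (\<omega> S \<theta>) y + integral {S..u} (\<lambda>s. FF \<theta> s (\<phi> (s - S) (\<omega> S \<theta>) y))"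
      using i by (simp add: f_def[abs_def] th'_def)
  qed
qed

lemma phi_sol: "\<theta> \<in> space M \<Longrightarrow> 0 \<le> b \<Longrightarrow> sol (FF \<theta>) (\<lambda>s. \<phi> s \<theta> y) 0 b"
  using seg_sol(1)[of \<theta> 0 b y] by (simp add: om_0)

lemma phi_cont: "\<theta> \<in> space M \<Longrightarrow> 0 \<le> b \<Longrightarrow> continuous_on {0..b} (\<lambda>s. \<phi> s \<theta> y)"
  using sol_cont phi_sol by blast

lemma hit_nonneg: "0 \<le> hit_time \<phi> \<theta> y"
  unfolding hit_time_def by (auto intro!: Inf_greatest)

lemma hit:
  assumes th: "\<theta> \<in> space M"
  shows "hit_time \<phi> \<theta> y = \<infinity> \<Longrightarrow> \<forall>s\<ge>0. \<phi> s \<theta> (frac y) < 1"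
    and "hit_time \<phi> \<theta> y \<noteq> \<infinity> \<Longrightarrow> \<exists>\<tau>>0. hit_time \<phi> \<theta> y = ereal \<tau> \<and> \<phi> \<tau> \<theta> (frac y) = 1 \<and>
            (\<forall>s. 0 \<le> s \<and> s < \<tau> \<longrightarrow> \<phi> s \<theta> (frac y) < 1)"
proof -
  define z where "z = frac y"
  have z1: "z < 1" unfolding z_def by (rule frac_lt_1)
  define Z where "Z = {t. 0 \<le> t \<and> \<phi> t \<theta> z = 1}"
  have ht: "hit_time \<phi> \<theta> y = Inf (ereal ` Z)"
    unfolding hit_time_def Z_def z_def by (rule arg_cong[where f=Inf]) auto
  have below: "\<exists>w\<in>Z. w \<le> s" if s: "0 \<le> s" "1 \<le> \<phi> s \<theta> z" for s
  proof -
    have "\<phi> 0 \<theta> z \<le> 1" using phi0[OF th] z1 by simp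
    then obtain w where "0 \<le> w" "w \<le> s" "\<phi> w \<theta> z = 1"
      using IVT'[of "\<lambda>t. \<phi> t \<theta> z" 0 1 s] s phi_cont[OF th s(1)] by auto
    thus ?thesis unfolding Z_def by auto
  qed
  {
    assume "hit_time \<phi> \<theta> y = \<infinity>"
    hence inf: "Inf (ereal ` Z) = \<infinity>" using ht by simp
    have "Z = {}"
    proof (rule ccontr)
      assume "Z \<noteq> {}"
      then obtain w where "w \<in> Z" by blast
      hence "Inf (ereal ` Z) \<le> ereal w" by (intro Inf_lower) auto
      thus False using inf by simp
    qed
    thus "\<forall>s\<ge>0. \<phi> s \<theta> (frac y) < 1" using below unfolding z_def by force
  }
  {
    assume "hit_time \<phi> \<theta> y \<noteq> \<infinity>"
    hence "Z \<noteq> {}" using ht by (auto simp: top_ereal_def)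
    then obtain w where w: "w \<in> Z" by blast
    have w0: "0 \<le> w" using w by (simp add: Z_def)
    define Zw where "Zw = {0..w} \<inter> (\<lambda>t. \<phi> t \<theta> z) -` {1}"
    have "closed Zw" unfolding Zw_def by (rule continuous_closed_preimage[OF phi_cont[OF th w0]]) auto
    moreover have "Zw \<noteq> {}" "bdd_below Zw" using w w0 by (auto simp: Zw_def Z_def bdd_below_def)
    ultimately have tZw: "Inf Zw \<in> Zw" by (intro closed_contains_Inf)
    define \<tau> where "\<tau> = Inf Zw"
    have tZ: "\<tau> \<in> Z" using tZw by (auto simp: \<tau>_def Zw_def Z_def)
    have tmin: "\<tau> \<le> v" if "v \<in> Z" for v
    proof (cases "v \<le> w")
      case True
      hence "v \<in> Zw" using that by (auto simp: Zw_def Z_def)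
      thus ?thesis unfolding \<tau>_def using \<open>bdd_below Zw\<close> by (rule cInf_lower)
    next
      case False thus ?thesis using tZw by (auto simp: \<tau>_def Zw_def)
    qed
    have "Inf (ereal ` Z) = ereal \<tau>" using tZ tmin by (intro cInf_eq_minimum) auto
    hence e: "hit_time \<phi> \<theta> y = ereal \<tau>" using ht by simp
    have t1: "\<phi> \<tau> \<theta> z = 1" "0 \<le> \<tau>" using tZ by (auto simp: Z_def)
    have tpos: "0 < \<tau>" using t1 phi0[OF th, of z] z1 by (cases "\<tau> = 0") auto
    have lt: "\<phi> s \<theta> z < 1" if sl: "0 \<le> s" "s < \<tau>" for s
    proof (rule ccontr)
      assume "\<not> \<phi> s \<theta> z < 1"
      then obtain v where "v \<in> Z" "v \<le> s" using below[of s] sl by force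
      thus False using tmin sl by force
    qed
    show "\<exists>\<tau>>0. hit_time \<phi> \<theta> y = ereal \<tau> \<and> \<phi> \<tau> \<theta> (frac y) = 1 \<and>
            (\<forall>s. 0 \<le> s \<and> s < \<tau> \<longrightarrow> \<phi> s \<theta> (frac y) < 1)"
      using tpos e t1 lt unfolding z_def by blast
  }
qed

definition hs where "hs \<theta> x n = hitS \<phi> \<omega> V \<theta> x n"
definition Sr where "Sr \<theta> x n = real_of_ereal (hs \<theta> x n)"
definition st where "st x n = (if n = 0 then frac x else V)"
definition seg where "seg \<theta> x n s = \<phi> (s - Sr \<theta> x n) (\<omega> (Sr \<theta> x n) \<theta>) (st x n)"

lemma hs_0[simp]: "hs \<theta> x 0 = 0" by (simp add: hs_def)

lemma hs_Suc: "\<theta> \<in> space M \<Longrightarrow>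
  hs \<theta> x (Suc n) = hs \<theta> x n + hit_time \<phi> (\<omega> (Sr \<theta> x n) \<theta>) (if n = 0 then x else V)"
  by (cases n) (simp_all add: hs_def Sr_def om_0)

lemma frac_st: "frac (if n = 0 then x else V) = st x n"
  using V0 V1 by (simp add: st_def frac_eq)

lemma hs_mono_Suc: "\<theta> \<in> space M \<Longrightarrow> hs \<theta> x n \<le> hs \<theta> x (Suc n)"
  unfolding hs_Suc by (intro ereal_le_add_self hit_nonneg)

lemma hs_nonneg: "\<theta> \<in> space M \<Longrightarrow> 0 \<le> hs \<theta> x n"
proof (induction n)
  case (Suc n) show ?case using Suc.IH[OF Suc.prems] hs_mono_Suc[OF Suc.prems, of x n] by (rule order_trans)
qed simp

lemma hs_incseq: "\<theta> \<in> space M \<Longrightarrow> incseq (hs \<theta> x)"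
  by (rule incseq_SucI) (rule hs_mono_Suc)

lemma hs_mono: "\<theta> \<in> space M \<Longrightarrow> m \<le> n \<Longrightarrow> hs \<theta> x m \<le> hs \<theta> x n"
  using hs_incseq unfolding incseq_def by blast

lemma lap:
  assumes th: "\<theta> \<in> space M" and a: "hs \<theta> x n = ereal a"
  shows "0 \<le> a" "Sr \<theta> x n = a"
    and "\<And>b. a \<le> b \<Longrightarrow> sol (FF \<theta>) (seg \<theta> x n) a b"
    and "seg \<theta> x n a = st x n"
    and "\<And>s. hs \<theta> x (Suc n) = \<infinity> \<Longrightarrow> a \<le> s \<Longrightarrow> seg \<theta> x n s < 1"
    and "hs \<theta> x (Suc n) \<noteq> \<infinity> \<Longrightarrow> \<exists>b. hs \<theta> x (Suc n) = ereal b \<and> a < b \<and> seg \<theta> x n b = 1 \<and>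
           (\<forall>s. a \<le> s \<and> s < b \<longrightarrow> seg \<theta> x n s < 1)"
proof -
  show a0: "0 \<le> a" using hs_nonneg[OF th, of x n] a by simp
  show Sa: "Sr \<theta> x n = a" using a by (simp add: Sr_def)
  define th' where "th' = \<omega> a \<theta>"
  have th': "th' \<in> space M" unfolding th'_def by (rule om_sp[OF th])
  define y where "y = (if n = 0 then x else V)"
  have segeq: "seg \<theta> x n = (\<lambda>s. \<phi> (s - a) th' (frac y))"
    by (simp add: fun_eq_iff seg_def Sa th'_def y_def frac_st)
  have hsS: "hs \<theta> x (Suc n) = ereal a + hit_time \<phi> th' y"
    using hs_Suc[OF th, of x n] by (simp add: a Sa th'_def y_def)
  show "\<And>b. a \<le> b \<Longrightarrow> sol (FF \<theta>) (seg \<theta> x n) a b"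
    unfolding segeq th'_def using seg_sol(1)[OF th a0] by blast
  show "seg \<theta> x n a = st x n" by (simp add: segeq phi0[OF th'] y_def frac_st)
  show "seg \<theta> x n s < 1" if "hs \<theta> x (Suc n) = \<infinity>" "a \<le> s" for s
  proof -
    have "hit_time \<phi> th' y = \<infinity>" using that(1) hsS by (cases "hit_time \<phi> th' y") auto
    thus ?thesis using hit(1)[OF th'] that(2) by (simp add: segeq)
  qed
  show "\<exists>b. hs \<theta> x (Suc n) = ereal b \<and> a < b \<and> seg \<theta> x n b = 1 \<and>
           (\<forall>s. a \<le> s \<and> s < b \<longrightarrow> seg \<theta> x n s < 1)" if "hs \<theta> x (Suc n) \<noteq> \<infinity>"
  proof -
    have "hit_time \<phi> th' y \<noteq> \<infinity>" using that hsS by auto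
    then obtain \<tau> where t: "\<tau> > 0" "hit_time \<phi> th' y = ereal \<tau>" "\<phi> \<tau> th' (frac y) = 1"
      "\<forall>s. 0 \<le> s \<and> s < \<tau> \<longrightarrow> \<phi> s th' (frac y) < 1" using hit(2)[OF th'] by blast
    show ?thesis
    proof (intro exI conjI allI impI)
      show "hs \<theta> x (Suc n) = ereal (a + \<tau>)" using hsS t by simp
      show "a < a + \<tau>" using t by simp
      show "seg \<theta> x n (a + \<tau>) = 1" using t by (simp add: segeq)
      fix s assume "a \<le> s \<and> s < a + \<tau>"
      thus "seg \<theta> x n s < 1" using t(4) by (simp add: segeq)
    qed
  qed
qed

lemma meas_F:
  assumes th: "\<theta> \<in> space M" and h: "continuous_on UNIV h"
  shows "(\<lambda>r. F (\<omega> r \<theta>) (h r)) \<in> borel_measurable borel"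
proof -
  have om: "(\<lambda>(t, \<theta>). \<omega> t \<theta>) \<in> borel \<Otimes>\<^sub>M M \<rightarrow>\<^sub>M M"
    using mds unfolding metric_dynamical_system_def by blast
  have p: "(\<lambda>r. (r, \<theta>)) \<in> borel \<rightarrow>\<^sub>M borel \<Otimes>\<^sub>M M"
    using th by (intro measurable_Pair measurable_ident_sets measurable_const) auto
  have o1: "(\<lambda>r. \<omega> r \<theta>) \<in> borel \<rightarrow>\<^sub>M M"
    using measurable_comp[OF p om] by (simp add: o_def)
  have hm: "h \<in> borel_measurable borel" by (rule borel_measurable_continuous_onI[OF h])
  have "(\<lambda>r. (\<omega> r \<theta>, h r)) \<in> borel \<rightarrow>\<^sub>M M \<Otimes>\<^sub>M borel"
    using o1 hm by (rule measurable_Pair)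
  from measurable_comp[OF this F_meas] show ?thesis by (simp add: o_def)
qed

lemma lip_bound:
  assumes "y \<in> {0..1}"
  shows "ennreal \<bar>f y\<bar> \<le> lip01_norm f"
proof -
  have "ennreal \<bar>f y\<bar> \<le> (SUP x\<in>{0..1}. ennreal \<bar>f x\<bar>)" using assms by (rule SUP_upper)
  also have "\<dots> \<le> lip01_norm f" unfolding lip01_norm_def by simp
  finally show ?thesis .
qed

lemma lap_int:
  assumes th: "\<theta> \<in> space M" and k: "1 \<le> k" and a: "hs \<theta> x k = ereal a"
    and b: "hs \<theta> x (Suc k) = ereal b" and c: "0 \<le> c" "c \<le> a" "b \<le> c + 1"
  shows "\<exists>\<alpha>. a \<le> \<alpha> \<and> \<alpha> < b \<and>
     ennreal (1 - V) \<le> (\<integral>\<^sup>+ r. ennreal \<bar>F (\<omega> r (\<omega> c \<theta>)) (seg \<theta> x k (r + c))\<bar> * indicator {\<alpha> - c<..b - c} r \<partial>lborel) \<and>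
     (\<forall>r \<in> {\<alpha> - c<..b - c}. ennreal \<bar>F (\<omega> r (\<omega> c \<theta>)) (seg \<theta> x k (r + c))\<bar> \<le> lip01_norm (F (\<omega> r (\<omega> c \<theta>))) \<and> r \<in> {0..1}) \<and>
     (\<lambda>r. ennreal \<bar>F (\<omega> r (\<omega> c \<theta>)) (seg \<theta> x k (r + c))\<bar> * indicator {\<alpha> - c<..b - c} r) \<in> borel_measurable lborel"
proof -
  define g where "g = seg \<theta> x k"
  have a0: "0 \<le> a" and Sa: "Sr \<theta> x k = a" using lap(1,2)[OF th a] by auto
  have solg: "\<And>b'. a \<le> b' \<Longrightarrow> sol (FF \<theta>) g a b'" using lap(3)[OF th a] unfolding g_def by blast
  have ga: "g a = V" using lap(4)[OF th a] k by (simp add: g_def st_def)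
  obtain b2 where b2: "hs \<theta> x (Suc k) = ereal b2" "a < b2" "g b2 = 1" "\<forall>s. a \<le> s \<and> s < b2 \<longrightarrow> g s < 1"
    using lap(6)[OF th a] b unfolding g_def by auto
  have bb: "b2 = b" using b2(1) b by simp
  have ab: "a < b" "g b = 1" "\<And>s. a \<le> s \<Longrightarrow> s < b \<Longrightarrow> g s < 1" using b2 bb by auto
  have sab: "sol (FF \<theta>) g a b" using solg ab by simp
  obtain \<alpha> where al: "a \<le> \<alpha>" "\<alpha> < b" "g \<alpha> = V" "\<forall>s. \<alpha> < s \<and> s \<le> b \<longrightarrow> V < g s"
    using last_crossing[OF sol_cont[OF sab], of V] ab ga V1 by auto
  have sal: "sol (FF \<theta>) g \<alpha> b" using sol_sub[OF sab, of \<alpha> b] al by auto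
  have I: "g b = g \<alpha> + integral {\<alpha>..b} (\<lambda>u. FF \<theta> u (g u))" using solD[OF sal, of b] al by auto
  have segeq: "g = (\<lambda>s. \<phi> (s - a) (\<omega> a \<theta>) (st x k))" by (simp add: fun_eq_iff g_def seg_def Sa)
  have absi0: "(\<lambda>u. \<bar>FF \<theta> u (g u)\<bar>) integrable_on {a..b}"
    using seg_sol(2)[OF th a0, of b "st x k"] ab unfolding segeq by simp
  have absi: "(\<lambda>u. \<bar>FF \<theta> u (g u)\<bar>) integrable_on {\<alpha>..b}"
    by (rule integrable_subinterval_real[OF absi0]) (use al in auto)
  define J where "J = integral {\<alpha>..b} (\<lambda>u. \<bar>FF \<theta> u (g u)\<bar>)"
  have "integral {\<alpha>..b} (\<lambda>u. FF \<theta> u (g u)) \<le> J"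
    unfolding J_def by (rule integral_le[OF solI[OF sal] absi]) simp
  hence J1: "1 - V \<le> J" using I ab al by simp
  have hi: "((\<lambda>u. \<bar>FF \<theta> u (g u)\<bar>) has_integral J) {\<alpha>..b}" using absi unfolding J_def by (rule integrable_integral)
  define f where "f r = \<bar>F (\<omega> r (\<omega> c \<theta>)) (g (r + c))\<bar>" for r
  have feq: "(\<lambda>r. \<bar>FF \<theta> (r + c) (g (r + c))\<bar>) = f"
  proof
    fix r show "\<bar>FF \<theta> (r + c) (g (r + c))\<bar> = f r"
      using om_add[OF th, of c r] by (simp add: FF_def f_def add.commute)
  qed
  have hf: "(f has_integral J) {\<alpha> - c..b - c}"
    using has_integral_shift_real_ivl[OF hi, of c] unfolding feq .
  have nn: "(\<integral>\<^sup>+ r. ennreal (f r) * indicator {\<alpha> - c..b - c} r \<partial>lborel) = ennreal J"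
    by (rule nn_integral_has_integral_lebesgue'[OF _ hf]) (simp add: f_def)
  have nn2: "(\<integral>\<^sup>+ r. ennreal (f r) * indicator {\<alpha> - c<..b - c} r \<partial>lborel) = ennreal J"
  proof -
    have "AE r in lborel. ennreal (f r) * indicator {\<alpha> - c<..b - c} r = ennreal (f r) * indicator {\<alpha> - c..b - c} r"
      using AE_lborel_singleton[of "\<alpha> - c"] by eventually_elim (auto simp: indicator_def)
    thus ?thesis using nn by (simp add: nn_integral_cong_AE)
  qed
  have bound: "\<forall>r \<in> {\<alpha> - c<..b - c}. ennreal (f r) \<le> lip01_norm (F (\<omega> r (\<omega> c \<theta>))) \<and> r \<in> {0..1}"
  proof
    fix r assume r: "r \<in> {\<alpha> - c<..b - c}"
    have r01: "r \<in> {0..1}" using r al c by auto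
    have "V < g (r + c)" using al r by auto
    moreover have "g (r + c) \<le> 1"
    proof (cases "r + c < b")
      case True thus ?thesis using ab(3)[of "r + c"] r al by auto
    next
      case False hence "r + c = b" using r by auto
      thus ?thesis using ab by simp
    qed
    ultimately have "g (r + c) \<in> {0..1}" using V0 by auto
    thus "ennreal (f r) \<le> lip01_norm (F (\<omega> r (\<omega> c \<theta>))) \<and> r \<in> {0..1}"
      using r01 unfolding f_def by (auto intro: lip_bound)
  qed
  define q where "q r = max \<alpha> (min b (r + c))" for r
  have cq: "continuous_on UNIV (\<lambda>r. g (q r))"
  proof (rule continuous_on_compose2[OF sol_cont[OF sal]])
    show "continuous_on UNIV q" unfolding q_def by (intro continuous_intros)
    show "q ` UNIV \<subseteq> {\<alpha>..b}" using al by (auto simp: q_def)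
  qed
  have mF: "(\<lambda>r. F (\<omega> r (\<omega> c \<theta>)) (g (q r))) \<in> borel_measurable borel"
    by (rule meas_F[OF om_sp[OF th] cq])
  have meq: "(\<lambda>r. ennreal (f r) * indicator {\<alpha> - c<..b - c} r) =
     (\<lambda>r. ennreal \<bar>F (\<omega> r (\<omega> c \<theta>)) (g (q r))\<bar> * indicator {\<alpha> - c<..b - c} r)"
  proof
    fix r show "ennreal (f r) * indicator {\<alpha> - c<..b - c} r =
     ennreal \<bar>F (\<omega> r (\<omega> c \<theta>)) (g (q r))\<bar> * indicator {\<alpha> - c<..b - c} r"
      by (cases "r \<in> {\<alpha> - c<..b - c}") (auto simp: f_def q_def)
  qed
  have meas: "(\<lambda>r. ennreal (f r) * indicator {\<alpha> - c<..b - c} r) \<in> borel_measurable lborel"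
    unfolding meq using mF by measurable
  have e: "ennreal (1 - V) \<le> ennreal J" using J1 by (rule ennreal_leI)
  show ?thesis
    using al bound meas e nn2 unfolding f_def g_def by (intro exI[of _ \<alpha>]) auto
qed

lemma zeno:
  assumes th: "\<theta> \<in> space M"
  shows "\<exists>n. ereal t < hs \<theta> x n"
proof (rule ccontr)
  assume "\<not> (\<exists>n. ereal t < hs \<theta> x n)"
  hence le: "\<And>n. hs \<theta> x n \<le> ereal t" by (simp add: not_less)
  define s where "s n = Sr \<theta> x n" for n
  have hse: "hs \<theta> x n = ereal (s n)" for n
  proof (cases "hs \<theta> x n")
    case (real r) thus ?thesis by (simp add: s_def Sr_def)
  next
    case PInf thus ?thesis using le[of n] by simp
  next
    case MInf thus ?thesis using hs_nonneg[OF th, of x n] by simp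
  qed
  have st: "s n \<le> t" for n using le[of n] hse[of n] by simp
  have smono: "s m \<le> s n" if "m \<le> n" for m n using hs_mono[OF th that, of x] hse by simp
  have bdd: "bdd_above (range s)" using st by (auto simp: bdd_above_def)
  define L where "L = Sup (range s)"
  have sL: "s n \<le> L" for n unfolding L_def using bdd by (simp add: cSup_upper)
  obtain m where m: "L - 1 < s m"
    using less_cSup_iff[of "range s" "L - 1"] bdd unfolding L_def by auto
  define m' where "m' = Suc m"
  define c where "c = s m'"
  have c0: "0 \<le> c" using hs_nonneg[OF th, of x m'] hse[of m'] by (simp add: c_def)
  have cm: "s m \<le> c" unfolding c_def m'_def by (rule smono) simp
  define th' where "th' = \<omega> c \<theta>"
  have th': "th' \<in> space M" unfolding th'_def by (rule om_sp[OF th])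
  define T where "T k \<alpha> r = ennreal \<bar>F (\<omega> r th') (seg \<theta> x k (r + c))\<bar> * indicator {\<alpha> - c<..s (Suc k) - c} r" for k \<alpha> r
  have ex: "\<forall>k. \<exists>\<alpha>. m' \<le> k \<longrightarrow> (s k \<le> \<alpha> \<and> \<alpha> < s (Suc k) \<and> ennreal (1 - V) \<le> integral\<^sup>N lborel (T k \<alpha>) \<and>
      (\<forall>r \<in> {\<alpha> - c<..s (Suc k) - c}. ennreal \<bar>F (\<omega> r th') (seg \<theta> x k (r + c))\<bar> \<le> lip01_norm (F (\<omega> r th')) \<and> r \<in> {0..1}) \<and>
      T k \<alpha> \<in> borel_measurable lborel)"
  proof
    fix k
    show "\<exists>\<alpha>. m' \<le> k \<longrightarrow> (s k \<le> \<alpha> \<and> \<alpha> < s (Suc k) \<and> ennreal (1 - V) \<le> integral\<^sup>N lborel (T k \<alpha>) \<and>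
      (\<forall>r \<in> {\<alpha> - c<..s (Suc k) - c}. ennreal \<bar>F (\<omega> r th') (seg \<theta> x k (r + c))\<bar> \<le> lip01_norm (F (\<omega> r th')) \<and> r \<in> {0..1}) \<and>
      T k \<alpha> \<in> borel_measurable lborel)"
    proof (cases "m' \<le> k")
      case False thus ?thesis by blast
    next
      case True
      have k1: "1 \<le> k" using True by (simp add: m'_def)
      have ck: "c \<le> s k" unfolding c_def using True by (rule smono)
      have "s (Suc k) \<le> c + 1" using sL[of "Suc k"] m cm by linarith
      from lap_int[OF th k1 hse[of k] hse[of "Suc k"] c0 ck this]
      show ?thesis unfolding T_def th'_def by blast
    qed
  qed
  then obtain A where A: "\<And>k. m' \<le> k \<Longrightarrow> s k \<le> A k \<and> A k < s (Suc k) \<and> ennreal (1 - V) \<le> integral\<^sup>N lborel (T k (A k)) \<and>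
      (\<forall>r \<in> {A k - c<..s (Suc k) - c}. ennreal \<bar>F (\<omega> r th') (seg \<theta> x k (r + c))\<bar> \<le> lip01_norm (F (\<omega> r th')) \<and> r \<in> {0..1}) \<and>
      T k (A k) \<in> borel_measurable lborel"
    by metis
  define G where "G = (\<integral>\<^sup>+ r. lip01_norm (F (\<omega> r th')) * indicator {0..1} r \<partial>lborel)"
  have Gfin: "G < \<infinity>" unfolding G_def using F_int[OF th'] by simp
  have bound: "ennreal (real N * (1 - V)) \<le> G" for N
  proof -
    let ?K = "{m'..<m' + N}"
    have disj: "r \<notin> {A l - c<..s (Suc l) - c}" if "k \<in> ?K" "l \<in> ?K" "k \<noteq> l" "r \<in> {A k - c<..s (Suc k) - c}" for k l r
    proof (cases "k < l")
      case True
      have "s (Suc k) \<le> s l" using True by (intro smono) simp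
      also have "\<dots> \<le> A l" using A[of l] that by auto
      finally show ?thesis using that by auto
    next
      case False hence lk: "l < k" using that by simp
      have "s (Suc l) \<le> s k" using lk by (intro smono) simp
      also have "\<dots> \<le> A k" using A[of k] that by auto
      finally show ?thesis using that by auto
    qed
    have pw: "(\<Sum>k\<in>?K. T k (A k) r) \<le> lip01_norm (F (\<omega> r th')) * indicator {0..1} r" for r
    proof (cases "\<exists>k\<in>?K. r \<in> {A k - c<..s (Suc k) - c}")
      case True
      then obtain k where k: "k \<in> ?K" "r \<in> {A k - c<..s (Suc k) - c}" by blast
      have z: "T l (A l) r = 0" if "l \<in> ?K - {k}" for l
        using disj[of k l r] k that by (auto simp: T_def)
      have "(\<Sum>k\<in>?K. T k (A k) r) = T k (A k) r + (\<Sum>l\<in>?K - {k}. T l (A l) r)"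
        using k(1) by (simp add: sum.remove)
      also have "\<dots> = T k (A k) r" using z by simp
      also have "\<dots> \<le> lip01_norm (F (\<omega> r th')) * indicator {0..1} r"
        using A[of k] k by (auto simp: T_def)
      finally show ?thesis .
    next
      case False
      hence "T k (A k) r = 0" if "k \<in> ?K" for k using that by (auto simp: T_def)
      thus ?thesis by simp
    qed
    have "ennreal (real N * (1 - V)) = (\<Sum>k\<in>?K. ennreal (1 - V))"
      using V1 by (simp add: ennreal_mult ennreal_of_nat_eq_real_of_nat)
    also have "\<dots> \<le> (\<Sum>k\<in>?K. integral\<^sup>N lborel (T k (A k)))"
      by (intro sum_mono) (use A in auto)
    also have "\<dots> = (\<integral>\<^sup>+ r. (\<Sum>k\<in>?K. T k (A k) r) \<partial>lborel)"
      by (rule nn_integral_sum[symmetric]) (use A in auto)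
    also have "\<dots> \<le> G" unfolding G_def by (intro nn_integral_mono pw)
    finally show ?thesis .
  qed
  obtain G' where G': "G = ennreal G'" "0 \<le> G'" using Gfin by (cases G) auto
  obtain N :: nat where N: "G' / (1 - V) < real N" using reals_Archimedean2 by blast
  have "G' < real N * (1 - V)" using N V1 by (simp add: field_simps)
  moreover have "real N * (1 - V) \<le> G'" using bound[of N] G' by (simp add: ennreal_le_iff)
  ultimately show False by simp
qed

definition nh where "nh \<theta> x t = num_hits \<phi> \<omega> V t \<theta> x"

lemma hs_fin: assumes th: "\<theta> \<in> space M" and le: "hs \<theta> x n \<le> ereal t"
  shows "hs \<theta> x n = ereal (Sr \<theta> x n)" "Sr \<theta> x n \<le> t"
proof -
  show e: "hs \<theta> x n = ereal (Sr \<theta> x n)"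
  proof (cases "hs \<theta> x n")
    case (real r) thus ?thesis by (simp add: Sr_def)
  next
    case PInf thus ?thesis using le by simp
  next
    case MInf thus ?thesis using hs_nonneg[OF th, of x n] by simp
  qed
  show "Sr \<theta> x n \<le> t" using le e by simp
qed

lemma hs_strict: assumes th: "\<theta> \<in> space M" and b: "hs \<theta> x (Suc n) = ereal b"
  shows "hs \<theta> x n = ereal (Sr \<theta> x n)" "Sr \<theta> x n < b"
proof -
  have "hs \<theta> x n \<le> ereal b" using hs_mono_Suc[OF th, of x n] b by simp
  from hs_fin[OF th this] show e: "hs \<theta> x n = ereal (Sr \<theta> x n)" by simp
  obtain b' where "hs \<theta> x (Suc n) = ereal b'" "Sr \<theta> x n < b'" using lap(6)[OF th e] b by auto
  thus "Sr \<theta> x n < b" using b by simp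
qed

lemma Sr_0[simp]: "Sr \<theta> x 0 = 0" by (simp add: Sr_def)

lemma nh_eq: assumes th: "\<theta> \<in> space M" and k: "hs \<theta> x k \<le> ereal t" "ereal t < hs \<theta> x (Suc k)"
  shows "nh \<theta> x t = k"
  unfolding nh_def num_hits_def hs_def[symmetric]
proof (rule Greatest_equality)
  show "hs \<theta> x k \<le> ereal t" by (rule k(1))
  fix y assume y: "hs \<theta> x y \<le> ereal t"
  show "y \<le> k"
  proof (rule ccontr)
    assume "\<not> y \<le> k"
    hence "hs \<theta> x (Suc k) \<le> hs \<theta> x y" by (intro hs_mono[OF th]) simp
    thus False using y k(2) by simp
  qed
qed

lemma nh: assumes th: "\<theta> \<in> space M" and t: "0 \<le> t"
  shows "hs \<theta> x (nh \<theta> x t) \<le> ereal t" "ereal t < hs \<theta> x (Suc (nh \<theta> x t))"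
proof -
  obtain n0 where n0: "ereal t < hs \<theta> x n0" using zeno[OF th] by blast
  define n1 where "n1 = (LEAST n. ereal t < hs \<theta> x n)"
  have n1: "ereal t < hs \<theta> x n1" unfolding n1_def using n0 by (rule LeastI)
  have n1pos: "n1 \<noteq> 0" using n1 t by (cases n1) auto
  define k where "k = n1 - 1"
  have kS: "Suc k = n1" using n1pos by (simp add: k_def)
  have "\<not> ereal t < hs \<theta> x k" unfolding n1_def k_def
    using not_less_Least[of "n1 - 1" "\<lambda>n. ereal t < hs \<theta> x n"] n1pos n1_def by auto
  hence k1: "hs \<theta> x k \<le> ereal t" by simp
  have k2: "ereal t < hs \<theta> x (Suc k)" using n1 kS by simp
  have "nh \<theta> x t = k" by (rule nh_eq[OF th k1 k2])
  thus "hs \<theta> x (nh \<theta> x t) \<le> ereal t" "ereal t < hs \<theta> x (Suc (nh \<theta> x t))" using k1 k2 by auto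
qed

lemma Vhat_eq: assumes th: "\<theta> \<in> space M"
  shows "Vhat \<phi> \<omega> V t \<theta> x = of_int \<lfloor>x\<rfloor> + real (nh \<theta> x t) + seg \<theta> x (nh \<theta> x t) t"
proof (cases "nh \<theta> x t = 0")
  case True thus ?thesis
    by (simp add: Vhat_def Let_def nh_def[symmetric] seg_def Sr_def hs_def[symmetric] st_def om_0[OF th])
next
  case False thus ?thesis
    by (simp add: Vhat_def Let_def nh_def[symmetric] seg_def Sr_def hs_def[symmetric] st_def)
qed

definition Inv :: "int \<Rightarrow> int \<Rightarrow> real \<Rightarrow> real \<Rightarrow> bool" where
  "Inv B H p1 p2 \<longleftrightarrow> real_of_int H + (p1 - p2) / (1 - V) \<le> real_of_int B \<and> (p1 < p2 \<longrightarrow> H \<le> B)"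

lemma Inv_trans:
  assumes I: "Inv B H p1 p2"
    and c1: "0 \<le> p1 - p2 \<longrightarrow> 0 \<le> q1 - q2 \<and> q1 - q2 \<le> p1 - p2"
    and c2: "p1 - p2 \<le> 0 \<longrightarrow> p1 - p2 \<le> q1 - q2 \<and> q1 - q2 \<le> 0"
  shows "Inv B H q1 q2"
proof -
  have v: "0 < 1 - V" using V1 by simp
  show ?thesis
  proof (cases "0 \<le> p1 - p2")
    case True
    hence "(q1 - q2) / (1 - V) \<le> (p1 - p2) / (1 - V)" using c1 v by (intro divide_right_mono) auto
    thus ?thesis using I True c1 unfolding Inv_def by auto
  next
    case False
    hence H: "H \<le> B" using I unfolding Inv_def by auto
    have "(q1 - q2) / (1 - V) \<le> 0" using c2 False v by (intro divide_nonpos_pos) auto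
    thus ?thesis using H unfolding Inv_def by auto
  qed
qed

lemma Inv_jump:
  assumes I: "Inv B H q1 q2" and hh: "h1 \<or> h2"
    and a1: "h1 \<Longrightarrow> q1 = 1 \<and> r1 = V" and b1: "\<not> h1 \<Longrightarrow> q1 < 1 \<and> r1 = q1"
    and a2: "h2 \<Longrightarrow> q2 = 1 \<and> r2 = V" and b2: "\<not> h2 \<Longrightarrow> q2 < 1 \<and> r2 = q2"
  shows "Inv B (H + (if h1 then 1 else 0) - (if h2 then 1 else 0)) r1 r2"
proof -
  have v: "0 < 1 - V" using V1 by simp
  consider "h1" "h2" | "h1" "\<not> h2" | "\<not> h1" "h2" using hh by blast
  thus ?thesis
  proof cases
    case 1 thus ?thesis using I a1 a2 unfolding Inv_def by auto
  next
    case 2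
    hence q: "q1 = 1" "r1 = V" "q2 < 1" "r2 = q2" using a1 b2 by auto
    have e: "(1 - q2) / (1 - V) = 1 + (V - q2) / (1 - V)" using v by (simp add: field_simps)
    have pos: "0 < (1 - q2) / (1 - V)" using q v by simp
    have Phi: "real_of_int H + (1 - q2) / (1 - V) \<le> real_of_int B" using I q unfolding Inv_def by simp
    hence "H < B" using pos by linarith
    thus ?thesis using Phi e q 2 unfolding Inv_def by auto
  next
    case 3
    hence q: "q2 = 1" "r2 = V" "q1 < 1" "r1 = q1" using a2 b1 by auto
    have e: "(q1 - 1) / (1 - V) = -1 + (q1 - V) / (1 - V)" using v by (simp add: field_simps)
    have Phi: "real_of_int H + (q1 - 1) / (1 - V) \<le> real_of_int B" "H \<le> B" using I q unfolding Inv_def by auto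
    thus ?thesis using e q 3 unfolding Inv_def by auto
  qed
qed

lemma Inv_sol:
  assumes th: "\<theta> \<in> space M" and s1: "sol (FF \<theta>) g1 a b" and s2: "sol (FF \<theta>) g2 a b" and ab: "a \<le> b"
    and I: "Inv B H (g1 a) (g2 a)"
  shows "Inv B H (g1 b) (g2 b)"
proof -
  have m: "\<And>s y z. s \<in> {a..b} \<Longrightarrow> y \<le> z \<Longrightarrow> FF \<theta> s z \<le> FF \<theta> s y" using FF_mono[OF th] by blast
  note c = contraction[OF m s1 s2 ab]
  show ?thesis by (rule Inv_trans[OF I]) (use c in blast)+
qed

lemma traj_step:
  assumes th: "\<theta> \<in> space M" and t: "0 \<le> t" and a: "Sr \<theta> x (nh \<theta> x t) \<le> a" "a \<le> t" "0 < a"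
  defines "n \<equiv> nh \<theta> x t"
  defines "h \<equiv> (Sr \<theta> x n = a)"
  defines "m \<equiv> (if h then n - 1 else n)"
  shows "Sr \<theta> x m < a" "0 \<le> Sr \<theta> x m"
    and "\<And>a'. Sr \<theta> x m \<le> a' \<Longrightarrow> a' < a \<Longrightarrow> nh \<theta> x a' = m"
    and "sol (FF \<theta>) (seg \<theta> x m) (Sr \<theta> x m) a"
    and "h \<Longrightarrow> seg \<theta> x m a = 1 \<and> seg \<theta> x n a = V \<and> n = Suc m"
    and "\<not> h \<Longrightarrow> seg \<theta> x m a < 1 \<and> m = n"
    and "sol (FF \<theta>) (seg \<theta> x n) a t"
proof -
  have hn: "hs \<theta> x n \<le> ereal t" "ereal t < hs \<theta> x (Suc n)" using nh[OF th t] by (auto simp: n_def)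
  have hsn: "hs \<theta> x n = ereal (Sr \<theta> x n)" using hs_fin[OF th hn(1)] by simp
  have an: "Sr \<theta> x n \<le> a" using a by (simp add: n_def)
  have soln: "sol (FF \<theta>) (seg \<theta> x n) a t"
    by (rule sol_sub[OF lap(3)[OF th hsn, of t]]) (use an a in auto)
  show "sol (FF \<theta>) (seg \<theta> x n) a t" by (rule soln)
  have "Sr \<theta> x m < a \<and> 0 \<le> Sr \<theta> x m \<and> (\<forall>a'. Sr \<theta> x m \<le> a' \<longrightarrow> a' < a \<longrightarrow> nh \<theta> x a' = m) \<and>
     sol (FF \<theta>) (seg \<theta> x m) (Sr \<theta> x m) a \<and>
     (h \<longrightarrow> seg \<theta> x m a = 1 \<and> seg \<theta> x n a = V \<and> n = Suc m) \<and> (\<not> h \<longrightarrow> seg \<theta> x m a < 1 \<and> m = n)"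
  proof (cases h)
    case True
    hence Sa: "Sr \<theta> x n = a" by (simp add: h_def)
    have n0: "n \<noteq> 0" using Sa a by (cases n) auto
    have mS: "Suc m = n" using True n0 by (simp add: m_def)
    have hsS: "hs \<theta> x (Suc m) = ereal a" using hsn Sa mS by simp
    have hm: "hs \<theta> x m = ereal (Sr \<theta> x m)" "Sr \<theta> x m < a" using hs_strict[OF th hsS] by auto
    have m0: "0 \<le> Sr \<theta> x m" using lap(1)[OF th hm(1)] .
    have nhm: "nh \<theta> x a' = m" if "Sr \<theta> x m \<le> a'" "a' < a" for a'
      by (rule nh_eq[OF th]) (use hm hsS that in auto)
    have solm: "sol (FF \<theta>) (seg \<theta> x m) (Sr \<theta> x m) a" using lap(3)[OF th hm(1)] hm by simp
    obtain b where b: "hs \<theta> x (Suc m) = ereal b" "seg \<theta> x m b = 1" using lap(6)[OF th hm(1)] hsS by auto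
    have s1: "seg \<theta> x m a = 1" using b hsS by simp
    have sV: "seg \<theta> x n a = V" using lap(4)[OF th hsn] Sa n0 by (simp add: st_def)
    show ?thesis using True hm m0 nhm solm s1 sV mS by auto
  next
    case False
    hence lt: "Sr \<theta> x n < a" using an by (simp add: h_def)
    have mn: "m = n" using False by (simp add: m_def)
    have m0: "0 \<le> Sr \<theta> x n" using lap(1)[OF th hsn] .
    have nhm: "nh \<theta> x a' = n" if "Sr \<theta> x n \<le> a'" "a' < a" for a'
    proof (rule nh_eq[OF th])
      show "hs \<theta> x n \<le> ereal a'" using hsn that by simp
      have "ereal a' < ereal t" using that a by simp
      thus "ereal a' < hs \<theta> x (Suc n)" using hn(2) by (rule order.strict_trans)
    qed
    have solm: "sol (FF \<theta>) (seg \<theta> x n) (Sr \<theta> x n) a" using lap(3)[OF th hsn] an by simp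
    have s1: "seg \<theta> x n a < 1"
    proof (cases "hs \<theta> x (Suc n) = \<infinity>")
      case True thus ?thesis using lap(5)[OF th hsn] an by simp
    next
      case False
      then obtain b where b: "hs \<theta> x (Suc n) = ereal b" "\<forall>s. Sr \<theta> x n \<le> s \<and> s < b \<longrightarrow> seg \<theta> x n s < 1"
        using lap(6)[OF th hsn] by auto
      have "a < b" using b(1) hn(2) a by simp
      thus ?thesis using b(2) an by simp
    qed
    show ?thesis using False mn lt m0 nhm solm s1 by auto
  qed
  thus "Sr \<theta> x m < a" "0 \<le> Sr \<theta> x m"
    "\<And>a'. Sr \<theta> x m \<le> a' \<Longrightarrow> a' < a \<Longrightarrow> nh \<theta> x a' = m"
    "sol (FF \<theta>) (seg \<theta> x m) (Sr \<theta> x m) a"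
    "h \<Longrightarrow> seg \<theta> x m a = 1 \<and> seg \<theta> x n a = V \<and> n = Suc m"
    "\<not> h \<Longrightarrow> seg \<theta> x m a < 1 \<and> m = n" by auto
qed

lemma main:
  assumes th: "\<theta> \<in> space M" and base: "Inv B (\<lfloor>x1\<rfloor> - \<lfloor>x2\<rfloor>) (frac x1) (frac x2)"
  shows "0 \<le> t \<Longrightarrow> Inv B (\<lfloor>x1\<rfloor> + int (nh \<theta> x1 t) - \<lfloor>x2\<rfloor> - int (nh \<theta> x2 t))
            (seg \<theta> x1 (nh \<theta> x1 t) t) (seg \<theta> x2 (nh \<theta> x2 t) t)"
proof -
  have "\<forall>t. 0 \<le> t \<longrightarrow> nh \<theta> x1 t + nh \<theta> x2 t = k \<longrightarrow>
     Inv B (\<lfloor>x1\<rfloor> + int (nh \<theta> x1 t) - \<lfloor>x2\<rfloor> - int (nh \<theta> x2 t))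
            (seg \<theta> x1 (nh \<theta> x1 t) t) (seg \<theta> x2 (nh \<theta> x2 t) t)" for k
  proof (induction k rule: less_induct)
    case (less k)
    show ?case
    proof (intro allI impI)
      fix t :: real assume t: "0 \<le> t" and k: "nh \<theta> x1 t + nh \<theta> x2 t = k"
      define n1 where "n1 = nh \<theta> x1 t"
      define n2 where "n2 = nh \<theta> x2 t"
      have hs1: "hs \<theta> x1 n1 = ereal (Sr \<theta> x1 n1)" "Sr \<theta> x1 n1 \<le> t"
        using hs_fin[OF th nh(1)[OF th t, of x1]] by (auto simp: n1_def)
      have hs2: "hs \<theta> x2 n2 = ereal (Sr \<theta> x2 n2)" "Sr \<theta> x2 n2 \<le> t"
        using hs_fin[OF th nh(1)[OF th t, of x2]] by (auto simp: n2_def)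
      show "Inv B (\<lfloor>x1\<rfloor> + int (nh \<theta> x1 t) - \<lfloor>x2\<rfloor> - int (nh \<theta> x2 t))
            (seg \<theta> x1 (nh \<theta> x1 t) t) (seg \<theta> x2 (nh \<theta> x2 t) t)"
      proof (cases "n1 = 0 \<and> n2 = 0")
        case True
        have z: "hs \<theta> x 0 = ereal 0" for x by (simp add: zero_ereal_def)
        have s1: "sol (FF \<theta>) (seg \<theta> x1 0) 0 t" using lap(3)[OF th z[of x1], of t] t by simp
        have s2: "sol (FF \<theta>) (seg \<theta> x2 0) 0 t" using lap(3)[OF th z[of x2], of t] t by simp
        have v1: "seg \<theta> x1 0 0 = frac x1" using lap(4)[OF th z[of x1]] by (simp add: st_def)
        have v2: "seg \<theta> x2 0 0 = frac x2" using lap(4)[OF th z[of x2]] by (simp add: st_def)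
        have "Inv B (\<lfloor>x1\<rfloor> - \<lfloor>x2\<rfloor>) (seg \<theta> x1 0 t) (seg \<theta> x2 0 t)"
          by (rule Inv_sol[OF th s1 s2 t]) (simp add: v1 v2 base)
        thus ?thesis using True by (simp add: n1_def n2_def)
      next
        case False
        define a where "a = max (Sr \<theta> x1 n1) (Sr \<theta> x2 n2)"
        have pos: "0 < Sr \<theta> x n" if "n \<noteq> 0" "hs \<theta> x n = ereal (Sr \<theta> x n)" for x n
        proof -
          have "hs \<theta> x (Suc (n - 1)) = ereal (Sr \<theta> x n)" using that by simp
          from hs_strict[OF th this] have "Sr \<theta> x (n - 1) < Sr \<theta> x n" "hs \<theta> x (n - 1) = ereal (Sr \<theta> x (n - 1))" by auto
          moreover have "0 \<le> Sr \<theta> x (n - 1)" using lap(1)[OF th \<open>hs \<theta> x (n - 1) = _\<close>] .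
          ultimately show ?thesis by linarith
        qed
        have apos: "0 < a" using False pos[OF _ hs1(1)] pos[OF _ hs2(1)] unfolding a_def by fastforce
        have at: "a \<le> t" using hs1 hs2 by (simp add: a_def)
        have a1: "Sr \<theta> x1 (nh \<theta> x1 t) \<le> a" "Sr \<theta> x2 (nh \<theta> x2 t) \<le> a"
          by (simp_all add: a_def n1_def n2_def)
        define h1 where "h1 = (Sr \<theta> x1 n1 = a)"
        define h2 where "h2 = (Sr \<theta> x2 n2 = a)"
        define m1 where "m1 = (if h1 then n1 - 1 else n1)"
        define m2 where "m2 = (if h2 then n2 - 1 else n2)"
        note T1 = traj_step[OF th t a1(1) at apos, folded n1_def, folded h1_def, folded m1_def]
        note T2 = traj_step[OF th t a1(2) at apos, folded n2_def, folded h2_def, folded m2_def]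
        have hh: "h1 \<or> h2" unfolding h1_def h2_def a_def by linarith
        define a' where "a' = max (Sr \<theta> x1 m1) (Sr \<theta> x2 m2)"
        have a'a: "a' < a" "0 \<le> a'" using T1(1,2) T2(1,2) by (auto simp: a'_def)
        have nh1: "nh \<theta> x1 a' = m1" by (rule T1(3)) (use a'a in \<open>auto simp: a'_def\<close>)
        have nh2: "nh \<theta> x2 a' = m2" by (rule T2(3)) (use a'a in \<open>auto simp: a'_def\<close>)
        have n1m: "int n1 = int m1 + (if h1 then 1 else 0)" using T1(5,6) by (cases h1) auto
        have n2m: "int n2 = int m2 + (if h2 then 1 else 0)" using T2(5,6) by (cases h2) auto
        have lt: "m1 + m2 < k" using hh n1m n2m k unfolding n1_def n2_def by (cases h1; cases h2) auto
        have IH: "Inv B (\<lfloor>x1\<rfloor> + int m1 - \<lfloor>x2\<rfloor> - int m2) (seg \<theta> x1 m1 a') (seg \<theta> x2 m2 a')"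
          using less.IH[OF lt] a'a nh1 nh2 by auto
        have sa1: "sol (FF \<theta>) (seg \<theta> x1 m1) a' a"
          by (rule sol_sub[OF T1(4)]) (use a'a in \<open>auto simp: a'_def\<close>)
        have sa2: "sol (FF \<theta>) (seg \<theta> x2 m2) a' a"
          by (rule sol_sub[OF T2(4)]) (use a'a in \<open>auto simp: a'_def\<close>)
        have I1: "Inv B (\<lfloor>x1\<rfloor> + int m1 - \<lfloor>x2\<rfloor> - int m2) (seg \<theta> x1 m1 a) (seg \<theta> x2 m2 a)"
          using Inv_sol[OF th sa1 sa2 _ IH] a'a by simp
        have I2: "Inv B (\<lfloor>x1\<rfloor> + int m1 - \<lfloor>x2\<rfloor> - int m2 + (if h1 then 1 else 0) - (if h2 then 1 else 0))
            (seg \<theta> x1 n1 a) (seg \<theta> x2 n2 a)"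
        proof (rule Inv_jump[OF I1 hh])
          show "h1 \<Longrightarrow> seg \<theta> x1 m1 a = 1 \<and> seg \<theta> x1 n1 a = V" using T1(5) by auto
          show "\<not> h1 \<Longrightarrow> seg \<theta> x1 m1 a < 1 \<and> seg \<theta> x1 n1 a = seg \<theta> x1 m1 a" using T1(6) by auto
          show "h2 \<Longrightarrow> seg \<theta> x2 m2 a = 1 \<and> seg \<theta> x2 n2 a = V" using T2(5) by auto
          show "\<not> h2 \<Longrightarrow> seg \<theta> x2 m2 a < 1 \<and> seg \<theta> x2 n2 a = seg \<theta> x2 m2 a" using T2(6) by auto
        qed
        have Heq: "\<lfloor>x1\<rfloor> + int m1 - \<lfloor>x2\<rfloor> - int m2 + (if h1 then 1 else 0) - (if h2 then 1 else 0) =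
            \<lfloor>x1\<rfloor> + int n1 - \<lfloor>x2\<rfloor> - int n2" using n1m n2m by simp
        show ?thesis using Inv_sol[OF th T1(7) T2(7) at] I2 unfolding Heq n1_def n2_def by blast
      qed
    qed
  qed
  thus "0 \<le> t \<Longrightarrow> ?thesis" by blast
qed

lemma final:
  assumes th: "\<theta> \<in> space M" and t: "0 \<le> t" and x: "x1 \<le> x2"
  shows "Vhat \<phi> \<omega> V t \<theta> x1 \<le> Vhat \<phi> \<omega> V t \<theta> x2 + (V / (1 - V) + 1)"
proof -
  define w where "w = 1 - V"
  have w: "0 < w" "w \<le> 1" using V0 V1 by (auto simp: w_def)
  define H0 where "H0 = \<lfloor>x1\<rfloor> - \<lfloor>x2\<rfloor>"
  define P0 where "P0 = real_of_int H0 + (frac x1 - frac x2) / (1 - V)"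
  define B where "B = max 0 \<lceil>P0\<rceil>"
  have H0: "H0 \<le> 0" using floor_mono[OF x] by (simp add: H0_def)
  have "P0 \<le> real_of_int \<lceil>P0\<rceil>" by (rule le_of_int_ceiling)
  also have "\<dots> \<le> real_of_int B" unfolding B_def by simp
  finally have base: "Inv B H0 (frac x1) (frac x2)"
    unfolding Inv_def P0_def[symmetric] using H0 by (auto simp: B_def)
  note I = main[OF th base[unfolded H0_def] t]
  define n1 where "n1 = nh \<theta> x1 t"
  define n2 where "n2 = nh \<theta> x2 t"
  define p1 where "p1 = seg \<theta> x1 n1 t"
  define p2 where "p2 = seg \<theta> x2 n2 t"
  define H where "H = \<lfloor>x1\<rfloor> + int n1 - \<lfloor>x2\<rfloor> - int n2"
  have I': "Inv B H p1 p2" using I by (simp add: H_def n1_def n2_def p1_def p2_def)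
  have diff: "Vhat \<phi> \<omega> V t \<theta> x1 - Vhat \<phi> \<omega> V t \<theta> x2 = real_of_int H + (p1 - p2)"
    by (simp add: Vhat_eq[OF th] H_def n1_def n2_def p1_def p2_def)
  have GB: "real_of_int H + (p1 - p2) \<le> real_of_int B"
  proof (cases "p1 < p2")
    case True thus ?thesis using I' unfolding Inv_def by auto
  next
    case False
    hence d: "0 \<le> p1 - p2" by simp
    have "(p1 - p2) * w \<le> p1 - p2" using d w by (simp add: mult_left_le)
    hence "p1 - p2 \<le> (p1 - p2) / w" using w by (simp add: le_divide_eq)
    thus ?thesis using I' unfolding Inv_def w_def by auto
  qed
  have BK: "real_of_int B \<le> V / (1 - V) + 1"
  proof (cases "\<lceil>P0\<rceil> \<le> 0")
    case True
    hence "B = 0" by (simp add: B_def)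
    moreover have "0 \<le> V / (1 - V)" using V0 V1 by simp
    ultimately show ?thesis by simp
  next
    case False
    hence B: "B = \<lceil>P0\<rceil>" by (simp add: B_def)
    have P0pos: "0 < P0" using False by simp
    have Hne: "H0 \<noteq> 0"
    proof
      assume "H0 = 0"
      hence "\<lfloor>x1\<rfloor> = \<lfloor>x2\<rfloor>" by (simp add: H0_def)
      hence "frac x1 - frac x2 \<le> 0" using x by (simp add: frac_def)
      hence "(frac x1 - frac x2) / (1 - V) \<le> 0" using w by (simp add: w_def divide_nonpos_pos)
      thus False using P0pos \<open>H0 = 0\<close> by (simp add: P0_def)
    qed
    hence Hm: "real_of_int H0 \<le> -1" using H0 by simp
    have "frac x1 - frac x2 < 1" using frac_lt_1[of x1] frac_ge_0[of x2] by linarith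
    hence "(frac x1 - frac x2) / (1 - V) < 1 / (1 - V)" using w by (simp add: w_def divide_strict_right_mono)
    hence "P0 < -1 + 1 / (1 - V)" using Hm by (simp add: P0_def)
    moreover have "real_of_int \<lceil>P0\<rceil> < P0 + 1" using ceiling_correct[of P0] by linarith
    moreover have "1 / (1 - V) = V / (1 - V) + 1" using w by (simp add: w_def field_simps)
    ultimately show ?thesis using B by simp
  qed
  show ?thesis using diff GB BK by simp
qed

end

theorem proposition5p1:
  fixes M :: "'a measure" and \<omega> :: "real \<Rightarrow> 'a \<Rightarrow> 'a"
    and F :: "'a \<Rightarrow> real \<Rightarrow> real" and \<phi> :: "real \<Rightarrow> 'a \<Rightarrow> real \<Rightarrow> real"
    and Vr :: real
  assumes mds: "metric_dynamical_system M \<omega>"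
    and Vr: "0 \<le> Vr" "Vr < 1"
    and F_meas: "(\<lambda>(\<theta>, x). F \<theta> x) \<in> borel_measurable (M \<Otimes>\<^sub>M borel)"
    and F_int: "\<And>\<theta>. \<theta> \<in> space M \<Longrightarrow>
                  (\<integral>\<^sup>+ t\<in>{0..1}. lip01_norm (F (\<omega> t \<theta>)) \<partial>lborel) < \<infinity>"
    and sol_int: "\<And>\<theta> x t. \<theta> \<in> space M \<Longrightarrow> 0 \<le> t \<Longrightarrow>
                  (\<lambda>s. F (\<omega> s \<theta>) (\<phi> s \<theta> x)) absolutely_integrable_on {0..t}"
    and sol_eq: "\<And>\<theta> x t. \<theta> \<in> space M \<Longrightarrow> 0 \<le> t \<Longrightarrow>
                  \<phi> t \<theta> x = x + integral {0..t} (\<lambda>s. F (\<omega> s \<theta>) (\<phi> s \<theta> x))"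
    and F_mono: "\<And>\<theta> x y. \<theta> \<in> space M \<Longrightarrow> x \<le> y \<Longrightarrow> F \<theta> y \<le> F \<theta> x"
  shows "\<forall>t\<ge>0. \<forall>\<theta>\<in>space M. \<forall>x1 x2. x1 \<le> x2 \<longrightarrow>
           Vhat \<phi> \<omega> Vr t \<theta> x1 \<le> Vhat \<phi> \<omega> Vr t \<theta> x2 + (Vr / (1 - Vr) + 1)"
proof -
  interpret sys M \<omega> F \<phi> Vr
    using mds Vr F_meas F_int sol_int sol_eq F_mono by (rule sys.intro)
  show ?thesis using final by blast
qed

end
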